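(* Let $t\ge 1$ and $r\ge 2$ be integers and let $\mathcal H$ be an $r$-uniform hypergraph with shadow graph $G$. (i) If $\mathcal H$ is Berge-$B_t$-free, then $G$ contains no copy of $B_{3rt}$ in which each of its $3rt$ triangles is the core of a Berge triangle in $\mathcal H$. (ii) If $\mathcal H$ is Berge-$F_t$-free, then $G$ contains no copy of $F_{3rt}$ in which each of its $3rt$ triangles is the core of a Berge triangle in $\mathcal H$.
   Context: The shadow graph of a hypergraph $\mathcal H$ is the graph on $V(\mathcal H)$ in which $xy$ is an edge iff some hyperedge contains both $x$ and $y$. A triangle $xyz$ of the shadow graph is the core of a Berge triangle in $\mathcal H$ if there are three distinct hyperedges $h_1,h_2,h_3$ of $\mathcal H$ with $\{x,y\}\subseteq h_1$, $\{y,z\}\subseteq h_2$, $\{x,z\}\subseteq h_3$. For a graph $F$, $\mathcal H$ contains a Berge-$F$ if there is an injection $\varphi:V(F)\to V(\mathcal H)$ and an injection $f:E(F)\to E(\mathcal H)$ with $\{\varphi(x),\varphi(y)\}\subseteq f(xy)$ for all $xy\in E(F)$; Berge-$F$-free means no Berge-$F$. The book $B_s$ has vertices $u,v,w_1,\dots,w_s$ and edges $uv,uw_i,vw_i$ ($1\le i\le s$); its triangles are $uvw_i$. The fan $F_s$ has vertices $u,v_1,\dots,v_s,w_1,\dots,w_s$ and edges $uv_i,uw_i,v_iw_i$ ($1\le i\le s$); its triangles are $uv_iw_i$. *)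

theory Defs
  imports Main
begin

(* A hypergraph is a set H of hyperedges (sets of vertices); V(H) = \<Union>H. *)
definition uniform :: "nat \<Rightarrow> 'a set set \<Rightarrow> bool" where
  "uniform r H \<longleftrightarrow> (\<forall>h\<in>H. card h = r)"

definition shadow_adj :: "'a set set \<Rightarrow> 'a \<Rightarrow> 'a \<Rightarrow> bool" where
  "shadow_adj H x y \<longleftrightarrow> x \<noteq> y \<and> (\<exists>h\<in>H. {x, y} \<subseteq> h)"

definition berge_triangle_core :: "'a set set \<Rightarrow> 'a \<Rightarrow> 'a \<Rightarrow> 'a \<Rightarrow> bool" where
  "berge_triangle_core H x y z \<longleftrightarrow>
     (\<exists>h1\<in>H. \<exists>h2\<in>H. \<exists>h3\<in>H. h1 \<noteq> h2 \<and> h1 \<noteq> h3 \<and> h2 \<noteq> h3 \<and>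
        {x, y} \<subseteq> h1 \<and> {y, z} \<subseteq> h2 \<and> {x, z} \<subseteq> h3)"

(* A graph F is given by a vertex set FV and a set FE of 2-element edges {x,y}. *)
definition has_berge :: "'a set set \<Rightarrow> 'b set \<Rightarrow> 'b set set \<Rightarrow> bool" where
  "has_berge H FV FE \<longleftrightarrow>
     (\<exists>\<phi> f. inj_on \<phi> FV \<and> \<phi> ` FV \<subseteq> \<Union>H \<and> inj_on f FE \<and> f ` FE \<subseteq> H \<and>
        (\<forall>e\<in>FE. \<phi> ` e \<subseteq> f e))"

(* Book B_s on vertices 0 = u, 1 = v, i+1 = w_i (1 \<le> i \<le> s) *)
definition book_V :: "nat \<Rightarrow> nat set" where
  "book_V s = {0..s+1}"
definition book_E :: "nat \<Rightarrow> nat set set" where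
  "book_E s = {{0,1}} \<union> (\<Union>i\<in>{1..s}. {{0, i+1}, {1, i+1}})"
definition book_triangles :: "nat \<Rightarrow> (nat \<times> nat \<times> nat) set" where
  "book_triangles s = {(0, 1, i+1) | i. i \<in> {1..s}}"

(* Fan F_s on vertices 0 = u, 2i-1 = v_i, 2i = w_i (1 \<le> i \<le> s) *)
definition fan_V :: "nat \<Rightarrow> nat set" where
  "fan_V s = {0..2*s}"
definition fan_E :: "nat \<Rightarrow> nat set set" where
  "fan_E s = (\<Union>i\<in>{1..s}. {{0, 2*i-1}, {0, 2*i}, {2*i-1, 2*i}})"
definition fan_triangles :: "nat \<Rightarrow> (nat \<times> nat \<times> nat) set" where
  "fan_triangles s = {(0, 2*i-1, 2*i) | i. i \<in> {1..s}}"

definition shadow_copy_with_cores ::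
  "'a set set \<Rightarrow> 'b set \<Rightarrow> 'b set set \<Rightarrow> ('b \<times> 'b \<times> 'b) set \<Rightarrow> bool" where
  "shadow_copy_with_cores H FV FE T \<longleftrightarrow>
     (\<exists>\<phi>. inj_on \<phi> FV \<and> \<phi> ` FV \<subseteq> \<Union>H \<and>
        (\<forall>x\<in>FV. \<forall>y\<in>FV. {x, y} \<in> FE \<longrightarrow> shadow_adj H (\<phi> x) (\<phi> y)) \<and>
        (\<forall>(a, b, c)\<in>T. berge_triangle_core H (\<phi> a) (\<phi> b) (\<phi> c)))"

end

theory Submission imports Defs begin

lemma pm_helper: "k \<ge> 1 \<Longrightarrow> p < 2 \<Longrightarrow> (2*k - p + 1) div 2 = k \<and> (2*k - p) mod 2 = (p::nat)"
proof -
  assume k: "k \<ge> 1" and p: "p < 2"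
  obtain j where j: "k = Suc j" using k by (cases k) auto
  have "p = 0 \<or> p = 1" using p by auto
  then show ?thesis using j by auto
qed

lemma parity_helper: "(x::nat) mod 2 = y mod 2 \<Longrightarrow> (x+1) div 2 = (y+1) div 2 \<Longrightarrow> x = y"
  by (metis add_right_cancel div_mult_mod_eq mod_add_left_eq)

lemma greedy:
  fixes I :: "'i set" and K :: "'i \<Rightarrow> 'i set"
  assumes "finite I" "\<forall>i\<in>I. i \<in> K i \<and> finite (K i) \<and> card (K i) \<le> m" "card I \<ge> t*m" "m \<ge> 1"
  shows "\<exists>S\<subseteq>I. card S = t \<and> (\<forall>i\<in>S. \<forall>j\<in>S. i \<noteq> j \<longrightarrow> j \<notin> K i \<or> i \<notin> K j)"
  using assms
proof (induction t arbitrary: I)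
  case 0
  then show ?case by (intro exI[of _ "{}"]) auto
next
  case (Suc t)
  have sm: "Suc t * m = m + t * m" by simp
  have "card I \<ge> 1" using Suc.prems(3,4) unfolding sm by linarith
  then have "I \<noteq> {}" by (metis card.empty not_one_le_zero)
  then obtain i where i: "i \<in> I" by blast
  define I' where "I' = I - K i"
  have "card I - card (K i) \<le> card I'" unfolding I'_def by (rule diff_card_le_card_Diff) (use Suc.prems i in auto)
  moreover have "card (K i) \<le> m" using Suc.prems(2) i by blast
  ultimately have "card I' \<ge> t * m" using Suc.prems(3) unfolding sm by linarith
  moreover have "finite I'" using Suc.prems unfolding I'_def by auto
  moreover have "\<forall>i\<in>I'. i \<in> K i \<and> finite (K i) \<and> card (K i) \<le> m" using Suc.prems unfolding I'_def by auto
  ultimately obtain S' where S': "S' \<subseteq> I'" "card S' = t" "\<forall>i\<in>S'. \<forall>j\<in>S'. i \<noteq> j \<longrightarrow> j \<notin> K i \<or> i \<notin> K j"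
    using Suc.IH Suc.prems by blast
  have iS: "i \<notin> S'" using S'(1) i Suc.prems unfolding I'_def by auto
  have fS: "finite S'" using S'(1) \<open>finite I'\<close> finite_subset by auto
  show ?case
  proof (intro exI[of _ "insert i S'"] conjI)
    show "insert i S' \<subseteq> I" using S'(1) i unfolding I'_def by auto
    show "card (insert i S') = Suc t" using iS fS S'(2) by simp
    show "\<forall>a\<in>insert i S'. \<forall>b\<in>insert i S'. a \<noteq> b \<longrightarrow> b \<notin> K a \<or> a \<notin> K b"
      using S' unfolding I'_def by auto
  qed
qed

lemma fan_part:
  fixes H :: "'a set set"
  assumes t: "t \<ge> 1" and r: "r \<ge> 2" and u: "uniform r H" and N: "N = 3*r*t"
    and sc: "shadow_copy_with_cores H (fan_V N) (fan_E N) (fan_triangles N)"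
  shows "has_berge H (fan_V t) (fan_E t)"
proof -
  obtain \<phi> where inj: "inj_on \<phi> (fan_V N)" and img: "\<phi> ` fan_V N \<subseteq> \<Union>H"
    and tri: "\<forall>(a, b, c)\<in>fan_triangles N. berge_triangle_core H (\<phi> a) (\<phi> b) (\<phi> c)"
    using sc unfolding shadow_copy_with_cores_def by blast
  have "\<forall>j\<in>{1..N}. \<exists>hs. fst hs \<in> H \<and> fst (snd hs) \<in> H \<and> snd (snd hs) \<in> H \<and>
      fst hs \<noteq> fst (snd hs) \<and> fst hs \<noteq> snd (snd hs) \<and> fst (snd hs) \<noteq> snd (snd hs) \<and>
      {\<phi> 0, \<phi> (2*j-1)} \<subseteq> fst hs \<and> {\<phi> (2*j-1), \<phi> (2*j)} \<subseteq> fst (snd hs) \<and> {\<phi> 0, \<phi> (2*j)} \<subseteq> snd (snd hs)"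
  proof
    fix j assume j: "j \<in> {1..N}"
    then have "(0, 2*j-1, 2*j) \<in> fan_triangles N" unfolding fan_triangles_def by auto
    then have "berge_triangle_core H (\<phi> 0) (\<phi> (2*j-1)) (\<phi> (2*j))" using tri by auto
    then obtain h1 h2 h3 where "h1 \<in> H" "h2 \<in> H" "h3 \<in> H" "h1 \<noteq> h2" "h1 \<noteq> h3" "h2 \<noteq> h3"
      "{\<phi> 0, \<phi> (2*j-1)} \<subseteq> h1" "{\<phi> (2*j-1), \<phi> (2*j)} \<subseteq> h2" "{\<phi> 0, \<phi> (2*j)} \<subseteq> h3"
      unfolding berge_triangle_core_def by blast
    then show "\<exists>hs. fst hs \<in> H \<and> fst (snd hs) \<in> H \<and> snd (snd hs) \<in> H \<and>
      fst hs \<noteq> fst (snd hs) \<and> fst hs \<noteq> snd (snd hs) \<and> fst (snd hs) \<noteq> snd (snd hs) \<and>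
      {\<phi> 0, \<phi> (2*j-1)} \<subseteq> fst hs \<and> {\<phi> (2*j-1), \<phi> (2*j)} \<subseteq> fst (snd hs) \<and> {\<phi> 0, \<phi> (2*j)} \<subseteq> snd (snd hs)"
      by (intro exI[of _ "(h1, h2, h3)"]) auto
  qed
  then obtain hs where hs: "\<forall>j\<in>{1..N}. fst (hs j) \<in> H \<and> fst (snd (hs j)) \<in> H \<and> snd (snd (hs j)) \<in> H \<and>
      fst (hs j) \<noteq> fst (snd (hs j)) \<and> fst (hs j) \<noteq> snd (snd (hs j)) \<and> fst (snd (hs j)) \<noteq> snd (snd (hs j)) \<and>
      {\<phi> 0, \<phi> (2*j-1)} \<subseteq> fst (hs j) \<and> {\<phi> (2*j-1), \<phi> (2*j)} \<subseteq> fst (snd (hs j)) \<and> {\<phi> 0, \<phi> (2*j)} \<subseteq> snd (snd (hs j))"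
    by metis
  define H1 where "H1 j = fst (hs j)" for j
  define H2 where "H2 j = fst (snd (hs j))" for j
  define H3 where "H3 j = snd (snd (hs j))" for j
  have Hs: "H1 j \<in> H" "H2 j \<in> H" "H3 j \<in> H" "H1 j \<noteq> H2 j" "H1 j \<noteq> H3 j" "H2 j \<noteq> H3 j"
    "\<phi> 0 \<in> H1 j" "\<phi> (2*j-1) \<in> H1 j" "\<phi> (2*j-1) \<in> H2 j" "\<phi> (2*j) \<in> H2 j" "\<phi> 0 \<in> H3 j" "\<phi> (2*j) \<in> H3 j"
    if "j \<in> {1..N}" for j
    using hs that unfolding H1_def H2_def H3_def by auto
  have cardh: "finite h \<and> card h = r" if "h \<in> H" for h
    using u that r unfolding uniform_def by (metis card.infinite not_numeral_le_zero)
  define U where "U j = H1 j \<union> H2 j \<union> H3 j" for j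
  define K where "K j = (\<lambda>x. (x+1) div 2) ` {x \<in> fan_V N. x \<noteq> 0 \<and> \<phi> x \<in> U j}" for j
  have Uf: "finite (U j) \<and> card (U j) \<le> 3*r" if "j \<in> {1..N}" for j
  proof -
    have "card (U j) \<le> card (H1 j) + card (H2 j) + card (H3 j)"
      unfolding U_def by (metis add_le_mono1 card_Un_le le_trans)
    then show ?thesis using cardh Hs[OF that] unfolding U_def by auto
  qed
  have Kin: "j' \<in> K j" if "j' \<in> {1..N}" "\<phi> (2*j'-1) \<in> U j \<or> \<phi> (2*j') \<in> U j" for j j'
  proof -
    have a: "(2*j'-1+1) div 2 = j'" "(2*j'+1) div 2 = j'" using that(1) by auto
    have b: "2*j'-1 \<in> fan_V N" "2*j' \<in> fan_V N" "2*j'-1 \<noteq> 0" "2*j' \<noteq> 0"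
      using that(1) unfolding fan_V_def by auto
    show ?thesis using that(2) a b unfolding K_def by (metis (mono_tags, lifting) image_eqI mem_Collect_eq)
  qed
  have Kprops: "\<forall>j\<in>{1..N}. j \<in> K j \<and> finite (K j) \<and> card (K j) \<le> 3*r"
  proof
    fix j assume j: "j \<in> {1..N}"
    have "j \<in> K j" using Kin[OF j] Hs[OF j] unfolding U_def by auto
    moreover have "finite (K j)" unfolding K_def fan_V_def by auto
    moreover have "card (K j) \<le> 3*r"
    proof -
      have "card (K j) \<le> card {x \<in> fan_V N. x \<noteq> 0 \<and> \<phi> x \<in> U j}" unfolding K_def
        by (rule card_image_le) (auto simp: fan_V_def)
      also have "\<dots> \<le> card (U j)"
        by (rule card_inj_on_le[where f = \<phi>]) (use inj Uf[OF j] in \<open>auto intro: inj_on_subset\<close>)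
      finally show ?thesis using Uf[OF j] by auto
    qed
    ultimately show "j \<in> K j \<and> finite (K j) \<and> card (K j) \<le> 3*r" by auto
  qed
  obtain S where S: "S \<subseteq> {1..N}" "card S = t" "\<forall>i\<in>S. \<forall>j\<in>S. i \<noteq> j \<longrightarrow> j \<notin> K i \<or> i \<notin> K j"
    using greedy[of "{1..N}" K "3*r" t] Kprops N r by (auto simp: mult.commute)
  obtain \<sigma> where \<sigma>: "bij_betw \<sigma> {1..t} S"
    using ex_bij_betw_nat_finite_1[of S] S(1,2) finite_subset by fastforce
  have \<sigma>S: "\<sigma> k \<in> S" if "k \<in> {1..t}" for k
    using \<sigma> that unfolding bij_betw_def by auto
  have \<sigma>N: "\<sigma> k \<in> {1..N}" if "k \<in> {1..t}" for k
    using \<sigma>S[OF that] S(1) by blast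
  have \<sigma>inj: "k = k'" if "k \<in> {1..t}" "k' \<in> {1..t}" "\<sigma> k = \<sigma> k'" for k k'
    using \<sigma> that unfolding bij_betw_def by (meson inj_onD)
  define \<tau> where "\<tau> x = (if x = 0 then 0 else 2 * \<sigma> ((x+1) div 2) - x mod 2)" for x :: nat
  define \<psi> where "\<psi> x = \<phi> (\<tau> x)" for x
  define f where "f e = (let x = Max e; j = \<sigma> ((x+1) div 2) in
      if (0::nat) \<in> e then (if odd x then H1 j else H3 j) else H2 j)" for e
  have \<tau>V: "\<tau> x \<in> fan_V N" if "x \<in> fan_V t" for x
  proof (cases "x = 0")
    case False
    then have "(x+1) div 2 \<in> {1..t}" using that unfolding fan_V_def by auto
    then show ?thesis using \<sigma>N False unfolding \<tau>_def fan_V_def by fastforce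
  qed (simp add: \<tau>_def fan_V_def)
  have \<tau>inj: "inj_on \<tau> (fan_V t)"
  proof (rule inj_onI)
    fix x y assume x: "x \<in> fan_V t" and y: "y \<in> fan_V t" and e: "\<tau> x = \<tau> y"
    have pos: "\<tau> z \<noteq> 0" if "z \<in> fan_V t" "z \<noteq> 0" for z
    proof -
      have "(z+1) div 2 \<in> {1..t}" using that unfolding fan_V_def by auto
      then show ?thesis using \<sigma>N that unfolding \<tau>_def by fastforce
    qed
    show "x = y"
    proof (cases "x = 0 \<or> y = 0")
      case True
      then show ?thesis using pos x y e by (metis \<tau>_def)
    next
      case False
      have kx: "(x+1) div 2 \<in> {1..t}" "(y+1) div 2 \<in> {1..t}" using x y False unfolding fan_V_def by auto
      then have a1: "\<sigma> ((x+1) div 2) \<ge> 1" "\<sigma> ((y+1) div 2) \<ge> 1" using \<sigma>N by auto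
      have px: "(\<tau> x + 1) div 2 = \<sigma> ((x+1) div 2) \<and> \<tau> x mod 2 = x mod 2"
        using pm_helper[OF a1(1), of "x mod 2"] False unfolding \<tau>_def by simp
      have py: "(\<tau> y + 1) div 2 = \<sigma> ((y+1) div 2) \<and> \<tau> y mod 2 = y mod 2"
        using pm_helper[OF a1(2), of "y mod 2"] False unfolding \<tau>_def by simp
      have "x mod 2 = y mod 2 \<and> \<sigma> ((x+1) div 2) = \<sigma> ((y+1) div 2)"
        using px py e by metis
      then have "x mod 2 = y mod 2" "(x+1) div 2 = (y+1) div 2" using \<sigma>inj kx by auto
      then show ?thesis by (rule parity_helper)
    qed
  qed
  have fe: "\<exists>k\<in>{1..t}. (e = {0,2*k-1} \<and> f e = H1 (\<sigma> k)) \<or> (e = {0,2*k} \<and> f e = H3 (\<sigma> k))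
      \<or> (e = {2*k-1,2*k} \<and> f e = H2 (\<sigma> k))" if "e \<in> fan_E t" for e
  proof -
    obtain k where k: "k \<in> {1..t}" "e = {0,2*k-1} \<or> e = {0,2*k} \<or> e = {2*k-1,2*k}"
    proof -
      have "\<exists>k\<in>{1..t}. e = {0,2*k-1} \<or> e = {0,2*k} \<or> e = {2*k-1,2*k}"
        using \<open>e \<in> fan_E t\<close> unfolding fan_E_def by blast
      then show ?thesis using that by blast
    qed
    have m1: "Max {0::nat,2*k-1} = 2*k-1" "Max {0::nat, 2*k} = 2*k" "Max {2*k-1,2*k} = 2*k" by auto
    have d: "(2*k-1+1) div 2 = k" "(2*k+1) div 2 = k" "odd (2*k-1)" "0 \<notin> {2*k-1,2*k}" using k(1) by auto
    have "(e = {0,2*k-1} \<and> f e = H1 (\<sigma> k)) \<or> (e = {0,2*k} \<and> f e = H3 (\<sigma> k))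
      \<or> (e = {2*k-1,2*k} \<and> f e = H2 (\<sigma> k))"
      using k(2)
    proof (elim disjE)
      assume "e = {0,2*k-1}" then show ?thesis using m1 d by (simp add: f_def Let_def)
    next
      assume "e = {0,2*k}" then show ?thesis using m1 d by (simp add: f_def Let_def)
    next
      assume "e = {2*k-1,2*k}" then show ?thesis using m1 d by (simp add: f_def Let_def)
    qed
    then show ?thesis using k(1) by blast
  qed
  have \<tau>e: "\<tau> (2*k-1) = 2*\<sigma> k - 1" "\<tau> (2*k) = 2*\<sigma> k" "\<tau> 0 = 0" if "k \<in> {1..t}" for k
  proof -
    have d: "(2*k-1+1) div 2 = k" "(2*k+1) div 2 = k" "(2*k-1) mod 2 = 1" using that by (cases k; auto)+
    have nz: "2*k-1 \<noteq> 0" "2*k \<noteq> 0" using that by auto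
    show "\<tau> (2*k-1) = 2*\<sigma> k - 1" using d(1,3) nz(1) unfolding \<tau>_def by simp
    show "\<tau> (2*k) = 2*\<sigma> k" using d(2) nz(2) unfolding \<tau>_def by simp
    show "\<tau> 0 = 0" unfolding \<tau>_def by simp
  qed
  have covers: "\<psi> ` e \<subseteq> f e" if "e \<in> fan_E t" for e
    using fe[OF that] proof
    fix k assume k: "k \<in> {1..t}" and c: "(e = {0,2*k-1} \<and> f e = H1 (\<sigma> k)) \<or> (e = {0,2*k} \<and> f e = H3 (\<sigma> k))
      \<or> (e = {2*k-1,2*k} \<and> f e = H2 (\<sigma> k))"
    note h = Hs[OF \<sigma>N[OF k]] \<tau>e[OF k]
    show ?thesis using c
    proof (elim disjE conjE)
      assume "e = {0,2*k-1}" "f e = H1 (\<sigma> k)" then show ?thesis using h by (simp add: \<psi>_def)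
    next
      assume "e = {0,2*k}" "f e = H3 (\<sigma> k)" then show ?thesis using h by (simp add: \<psi>_def)
    next
      assume "e = {2*k-1,2*k}" "f e = H2 (\<sigma> k)" then show ?thesis using h by (simp add: \<psi>_def)
    qed
  qed
  have fH: "f e \<in> H" if e_in: "e \<in> fan_E t" for e
  proof -
    obtain k where k: "k \<in> {1..t}" and c: "(e = {0,2*k-1} \<and> f e = H1 (\<sigma> k)) \<or> (e = {0,2*k} \<and> f e = H3 (\<sigma> k))
      \<or> (e = {2*k-1,2*k} \<and> f e = H2 (\<sigma> k))" using fe[OF e_in] by blast
    show ?thesis using c Hs(1-3)[OF \<sigma>N[OF k]] by (elim disjE conjE) simp_all
  qed
  have finj: "inj_on f (fan_E t)"
  proof (rule inj_onI)
    fix e e' assume e: "e \<in> fan_E t" and e': "e' \<in> fan_E t" and eq: "f e = f e'"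
    obtain k where k: "k \<in> {1..t}" and c: "(e = {0,2*k-1} \<and> f e = H1 (\<sigma> k)) \<or> (e = {0,2*k} \<and> f e = H3 (\<sigma> k))
      \<or> (e = {2*k-1,2*k} \<and> f e = H2 (\<sigma> k))" using fe[OF e] by blast
    obtain k' where k': "k' \<in> {1..t}" and c': "(e' = {0,2*k'-1} \<and> f e' = H1 (\<sigma> k')) \<or> (e' = {0,2*k'} \<and> f e' = H3 (\<sigma> k'))
      \<or> (e' = {2*k'-1,2*k'} \<and> f e' = H2 (\<sigma> k'))" using fe[OF e'] by blast
    show "e = e'"
    proof (cases "\<sigma> k = \<sigma> k'")
      case True
      then have "k = k'" using \<sigma>inj k k' by auto
      then show ?thesis using c c' eq Hs(4-6)[OF \<sigma>N[OF k]] True by (elim disjE conjE) simp_all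
    next
      case False
      have U1: "f e \<in> {H1 (\<sigma> k), H2 (\<sigma> k), H3 (\<sigma> k)}" using c by auto
      have U2: "f e' \<in> {H1 (\<sigma> k'), H2 (\<sigma> k'), H3 (\<sigma> k')}" using c' by auto
      have "\<phi> (2*\<sigma> k-1) \<in> f e \<or> \<phi> (2*\<sigma> k) \<in> f e" using U1 Hs[OF \<sigma>N[OF k]] by auto
      then have A: "\<sigma> k \<in> K (\<sigma> k')" using Kin[OF \<sigma>N[OF k], of "\<sigma> k'"] eq U2 unfolding U_def by auto
      have "\<phi> (2*\<sigma> k'-1) \<in> f e' \<or> \<phi> (2*\<sigma> k') \<in> f e'" using U2 Hs[OF \<sigma>N[OF k']] by auto
      then have B: "\<sigma> k' \<in> K (\<sigma> k)" using Kin[OF \<sigma>N[OF k'], of "\<sigma> k"] eq U1 unfolding U_def by auto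
      show ?thesis using S(3) \<sigma>S[OF k] \<sigma>S[OF k'] False A B by blast
    qed
  qed
  have \<psi>inj: "inj_on \<psi> (fan_V t)"
    unfolding \<psi>_def using comp_inj_on[OF \<tau>inj inj_on_subset[OF inj]] \<tau>V by (auto simp: comp_def)
  have \<psi>img: "\<psi> ` fan_V t \<subseteq> \<Union>H" using img \<tau>V unfolding \<psi>_def by auto
  have fimg: "f ` fan_E t \<subseteq> H" using fH by blast
  have cov: "\<forall>e\<in>fan_E t. \<psi> ` e \<subseteq> f e" using covers by blast
  show ?thesis unfolding has_berge_def
    by (rule exI[of _ \<psi>], rule exI[of _ f]) (intro conjI \<psi>inj \<psi>img finj fimg cov)
qed


lemma book_part:
  fixes H :: "'a set set"
  assumes t: "t \<ge> 1" and r: "r \<ge> 2" and u: "uniform r H" and N: "N = 3*r*t"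
    and sc: "shadow_copy_with_cores H (book_V N) (book_E N) (book_triangles N)"
  shows "has_berge H (book_V t) (book_E t)"
proof -
  obtain \<phi> where inj: "inj_on \<phi> (book_V N)" and img: "\<phi> ` book_V N \<subseteq> \<Union>H"
    and tri: "\<forall>(a, b, c)\<in>book_triangles N. berge_triangle_core H (\<phi> a) (\<phi> b) (\<phi> c)"
    using sc unfolding shadow_copy_with_cores_def by blast
  have "\<forall>j\<in>{1..N}. \<exists>hs. fst hs \<in> H \<and> fst (snd hs) \<in> H \<and> snd (snd hs) \<in> H \<and>
      fst hs \<noteq> fst (snd hs) \<and> fst hs \<noteq> snd (snd hs) \<and> fst (snd hs) \<noteq> snd (snd hs) \<and>
      {\<phi> 0, \<phi> 1} \<subseteq> fst hs \<and> {\<phi> 1, \<phi> (j+1)} \<subseteq> fst (snd hs) \<and> {\<phi> 0, \<phi> (j+1)} \<subseteq> snd (snd hs)"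
  proof
    fix j assume j: "j \<in> {1..N}"
    then have "(0, 1, j+1) \<in> book_triangles N" unfolding book_triangles_def by auto
    then have "berge_triangle_core H (\<phi> 0) (\<phi> 1) (\<phi> (j+1))" using tri by auto
    then obtain h1 h2 h3 where "h1 \<in> H" "h2 \<in> H" "h3 \<in> H" "h1 \<noteq> h2" "h1 \<noteq> h3" "h2 \<noteq> h3"
      "{\<phi> 0, \<phi> 1} \<subseteq> h1" "{\<phi> 1, \<phi> (j+1)} \<subseteq> h2" "{\<phi> 0, \<phi> (j+1)} \<subseteq> h3"
      unfolding berge_triangle_core_def by blast
    then show "\<exists>hs. fst hs \<in> H \<and> fst (snd hs) \<in> H \<and> snd (snd hs) \<in> H \<and>
      fst hs \<noteq> fst (snd hs) \<and> fst hs \<noteq> snd (snd hs) \<and> fst (snd hs) \<noteq> snd (snd hs) \<and>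
      {\<phi> 0, \<phi> 1} \<subseteq> fst hs \<and> {\<phi> 1, \<phi> (j+1)} \<subseteq> fst (snd hs) \<and> {\<phi> 0, \<phi> (j+1)} \<subseteq> snd (snd hs)"
      by (intro exI[of _ "(h1, h2, h3)"]) auto
  qed
  then obtain hs where hs: "\<forall>j\<in>{1..N}. fst (hs j) \<in> H \<and> fst (snd (hs j)) \<in> H \<and> snd (snd (hs j)) \<in> H \<and>
      fst (hs j) \<noteq> fst (snd (hs j)) \<and> fst (hs j) \<noteq> snd (snd (hs j)) \<and> fst (snd (hs j)) \<noteq> snd (snd (hs j)) \<and>
      {\<phi> 0, \<phi> 1} \<subseteq> fst (hs j) \<and> {\<phi> 1, \<phi> (j+1)} \<subseteq> fst (snd (hs j)) \<and> {\<phi> 0, \<phi> (j+1)} \<subseteq> snd (snd (hs j))"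
    by metis
  define H1 where "H1 j = fst (hs j)" for j
  define H2 where "H2 j = fst (snd (hs j))" for j
  define H3 where "H3 j = snd (snd (hs j))" for j
  have Hs: "H1 j \<in> H" "H2 j \<in> H" "H3 j \<in> H" "H1 j \<noteq> H2 j" "H1 j \<noteq> H3 j" "H2 j \<noteq> H3 j"
    "\<phi> 0 \<in> H1 j" "\<phi> 1 \<in> H1 j" "\<phi> 1 \<in> H2 j" "\<phi> (j+1) \<in> H2 j" "\<phi> 0 \<in> H3 j" "\<phi> (j+1) \<in> H3 j"
    if "j \<in> {1..N}" for j
    using hs that unfolding H1_def H2_def H3_def by auto
  have cardh: "finite h \<and> card h = r" if "h \<in> H" for h
    using u that r unfolding uniform_def by (metis card.infinite not_numeral_le_zero)
  have N1: "1 \<in> {1..N}" using t r N by auto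
  define e0 where "e0 = H1 1"
  have injs: "inj_on (\<lambda>i. \<phi> (i+1)) A" if "A \<subseteq> {1..N}" for A
  proof (rule inj_onI)
    fix x y assume xA: "x \<in> A" and yA: "y \<in> A" and eq: "\<phi> (x+1) = \<phi> (y+1)"
    have "x+1 \<in> book_V N" "y+1 \<in> book_V N" using xA yA that unfolding book_V_def by auto
    then have "x+1 = y+1" using inj_onD[OF inj eq] by blast
    then show "x = y" by simp
  qed
  define J where "J = {i\<in>{1..N}. \<phi> (i+1) \<in> e0}"
  define I where "I = {1..N} - J"
  have cJ: "card J \<le> r"
  proof -
    have "card J \<le> card e0"
      by (rule card_inj_on_le[OF injs]) (use cardh Hs[OF N1] in \<open>auto simp: J_def e0_def\<close>)
    then show ?thesis using cardh Hs[OF N1] unfolding e0_def by auto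
  qed
  have cI: "card I \<ge> t * (2*r)"
  proof -
    have "card I = card {1..N} - card J" unfolding I_def by (rule card_Diff_subset) (auto simp: J_def)
    then have "card I = N - card J" by simp
    moreover have "r \<le> r * t" using t by simp
    moreover have "t*(2*r) = 2*(r*t)" "N = 3*(r*t)" using N by (simp_all add: algebra_simps)
    ultimately show ?thesis using cJ by linarith
  qed
  define K where "K j = {j'\<in>{1..N}. \<phi> (j'+1) \<in> H2 j \<union> H3 j}" for j
  have Kprops: "\<forall>j\<in>I. j \<in> K j \<and> finite (K j) \<and> card (K j) \<le> 2*r"
  proof
    fix j assume "j \<in> I"
    then have j: "j \<in> {1..N}" unfolding I_def by auto
    have "j \<in> K j" using Hs[OF j] j unfolding K_def by auto
    moreover have "finite (K j)" unfolding K_def by auto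
    moreover have "card (K j) \<le> 2*r"
    proof -
      have "card (K j) \<le> card (H2 j \<union> H3 j)"
        by (rule card_inj_on_le[OF injs]) (use cardh Hs[OF j] in \<open>auto simp: K_def\<close>)
      also have "\<dots> \<le> card (H2 j) + card (H3 j)" by (rule card_Un_le)
      finally show ?thesis using cardh Hs[OF j] by auto
    qed
    ultimately show "j \<in> K j \<and> finite (K j) \<and> card (K j) \<le> 2*r" by auto
  qed
  obtain S where S: "S \<subseteq> I" "card S = t" "\<forall>i\<in>S. \<forall>j\<in>S. i \<noteq> j \<longrightarrow> j \<notin> K i \<or> i \<notin> K j"
    using greedy[of I K "2*r" t] Kprops cI r unfolding I_def by auto
  obtain \<sigma> where \<sigma>: "bij_betw \<sigma> {1..t} S"
    using ex_bij_betw_nat_finite_1[of S] S(1,2) finite_subset unfolding I_def by fastforce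
  have \<sigma>S: "\<sigma> k \<in> S" if "k \<in> {1..t}" for k
    using \<sigma> that unfolding bij_betw_def by auto
  have \<sigma>N: "\<sigma> k \<in> {1..N}" "\<phi> (\<sigma> k + 1) \<notin> e0" if "k \<in> {1..t}" for k
    using \<sigma>S[OF that] S(1) unfolding I_def J_def by auto
  have \<sigma>inj: "k = k'" if "k \<in> {1..t}" "k' \<in> {1..t}" "\<sigma> k = \<sigma> k'" for k k'
    using \<sigma> that unfolding bij_betw_def by (meson inj_onD)
  define \<tau> where "\<tau> x = (if x \<le> 1 then x else \<sigma> (x-1) + 1)" for x :: nat
  define \<psi> where "\<psi> x = \<phi> (\<tau> x)" for x
  define f where "f e = (if e = {0,1} then e0 else (let x = Max e; j = \<sigma> (x-1) in
      if (0::nat) \<in> e then H3 j else H2 j))" for e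
  have \<tau>V: "\<tau> x \<in> book_V N" if "x \<in> book_V t" for x
  proof (cases "x \<le> 1")
    case False
    then have "x - 1 \<in> {1..t}" using that unfolding book_V_def by auto
    then show ?thesis using \<sigma>N False unfolding \<tau>_def book_V_def by fastforce
  qed (auto simp add: \<tau>_def book_V_def N)
  have \<tau>inj: "inj_on \<tau> (book_V t)"
  proof (rule inj_onI)
    fix x y assume x: "x \<in> book_V t" and y: "y \<in> book_V t" and e: "\<tau> x = \<tau> y"
    have pos: "\<tau> z \<ge> 2" if "z \<in> book_V t" "\<not> z \<le> 1" for z
    proof -
      have "z - 1 \<in> {1..t}" using that unfolding book_V_def by auto
      then show ?thesis using \<sigma>N that unfolding \<tau>_def by fastforce
    qed
    show "x = y"
    proof (cases "x \<le> 1 \<or> y \<le> 1")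
      case True
      then show ?thesis using pos[OF x] pos[OF y] e unfolding \<tau>_def by (auto split: if_splits)
    next
      case False
      have kx: "x - 1 \<in> {1..t}" "y - 1 \<in> {1..t}" using x y False unfolding book_V_def by auto
      then have "\<sigma> (x-1) = \<sigma> (y-1)" using e False unfolding \<tau>_def by auto
      then have "x - 1 = y - 1" using \<sigma>inj kx by auto
      then show ?thesis using False by auto
    qed
  qed
  have fe: "(e = {0,1} \<and> f e = e0) \<or> (\<exists>k\<in>{1..t}. (e = {0,k+1} \<and> f e = H3 (\<sigma> k))
      \<or> (e = {1,k+1} \<and> f e = H2 (\<sigma> k)))" if "e \<in> book_E t" for e
  proof (cases "e = {0,1}")
    case True then show ?thesis unfolding f_def by auto
  next
    case False
    obtain k where k: "k \<in> {1..t}" "e = {0,k+1} \<or> e = {1,k+1}"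
    proof -
      have "\<exists>k\<in>{1..t}. e = {0,k+1} \<or> e = {1,k+1}"
        using \<open>e \<in> book_E t\<close> False unfolding book_E_def by blast
      then show ?thesis using that by blast
    qed
    have m1: "Max {0::nat,k+1} = k+1" "Max {1::nat, k+1} = k+1" using k(1) by auto
    have k1: "k+1 \<noteq> (1::nat)" "k+1 \<noteq> 0" using k(1) by auto
    have d1: "0 \<notin> {1::nat,k+1}" using k1 by simp
    have d2: "{0,k+1} \<noteq> {0::nat,1}"
    proof
      assume "{0,k+1} = {0::nat,1}"
      then have "1 \<in> {0,k+1}" by (metis insertI1 insert_commute)
      then show False using k1 by simp
    qed
    have d3: "{1,k+1} \<noteq> {0::nat,1}"
    proof
      assume "{1,k+1} = {0::nat,1}"
      then have "0 \<in> {1,k+1}" by (metis insertI1)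
      then show False using k1 by simp
    qed
    note d = d1 d2 d3
    have "(e = {0,k+1} \<and> f e = H3 (\<sigma> k)) \<or> (e = {1,k+1} \<and> f e = H2 (\<sigma> k))"
      using k(2)
    proof (elim disjE)
      assume "e = {0,k+1}" then show ?thesis using m1 d by (simp add: f_def Let_def)
    next
      assume "e = {1,k+1}" then show ?thesis using m1 d by (simp add: f_def Let_def)
    qed
    then show ?thesis using k(1) by blast
  qed
  have covers: "\<psi> ` e \<subseteq> f e" if "e \<in> book_E t" for e
    using fe[OF that] proof
    assume a: "e = {0,1} \<and> f e = e0"
    then have "f e = e0" by (rule conjunct2)
    moreover have "\<psi> ` e = {\<phi> 0, \<phi> 1}" using conjunct1[OF a] unfolding \<psi>_def \<tau>_def by simp
    ultimately show ?thesis using Hs(7,8)[OF N1] unfolding e0_def by simp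
  next
    assume "\<exists>k\<in>{1..t}. (e = {0,k+1} \<and> f e = H3 (\<sigma> k)) \<or> (e = {1,k+1} \<and> f e = H2 (\<sigma> k))"
    then obtain k where k: "k \<in> {1..t}" and c: "(e = {0,k+1} \<and> f e = H3 (\<sigma> k)) \<or> (e = {1,k+1} \<and> f e = H2 (\<sigma> k))"
      by blast
    have t1: "\<tau> 0 = 0" "\<tau> 1 = 1" "\<tau> (k+1) = \<sigma> k + 1" using k unfolding \<tau>_def by auto
    note h = Hs[OF \<sigma>N(1)[OF k]]
    show ?thesis using c
    proof (elim disjE conjE)
      assume "e = {0,k+1}" "f e = H3 (\<sigma> k)" then show ?thesis using h t1 by (simp add: \<psi>_def)
    next
      assume "e = {1,k+1}" "f e = H2 (\<sigma> k)" then show ?thesis using h t1 by (simp add: \<psi>_def)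
    qed
  qed
  have fH: "f e \<in> H" if e_in: "e \<in> book_E t" for e
  proof -
    consider "f e = e0" | k where "k \<in> {1..t}" "f e = H3 (\<sigma> k) \<or> f e = H2 (\<sigma> k)"
      using fe[OF e_in] by blast
    then show ?thesis
    proof cases
      case 1 then show ?thesis using Hs(1)[OF N1] unfolding e0_def by simp
    next
      case (2 k) then show ?thesis using Hs(2,3)[OF \<sigma>N(1)[OF 2(1)]] by auto
    qed
  qed
  have finj: "inj_on f (book_E t)"
  proof (rule inj_onI)
    fix e e' assume e: "e \<in> book_E t" and e': "e' \<in> book_E t" and eq: "f e = f e'"
    have ne0: "f b \<noteq> e0" if bh: "b \<in> book_E t" "b \<noteq> {0,1}" for b
    proof -
      obtain k where k: "k \<in> {1..t}" and c: "(b = {0,k+1} \<and> f b = H3 (\<sigma> k)) \<or> (b = {1,k+1} \<and> f b = H2 (\<sigma> k))"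
        using fe[OF bh(1)] bh(2) by blast
      have "f b = H3 (\<sigma> k) \<or> f b = H2 (\<sigma> k)" using c by blast
      then have "\<phi> (\<sigma> k + 1) \<in> f b" using Hs(10,12)[OF \<sigma>N(1)[OF k]] by auto
      then show ?thesis using \<sigma>N(2)[OF k] by auto
    qed
    have f01: "f {0,1} = e0" unfolding f_def by simp
    show "e = e'"
    proof (cases "e = {0,1} \<or> e' = {0,1}")
      case True
      note T = True
      show ?thesis
      proof (rule ccontr)
        assume ne: "e \<noteq> e'"
        show False
        proof (cases "e = {0,1}")
          case True
          have e'n: "e' \<noteq> {0,1}" using ne True by simp
          show False using ne0[OF e' e'n] eq f01 True by simp
        next
          case False
          then have "e' = {0,1}" using T by simp
          then show False using ne0[OF e False] eq f01 by simp
        qed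
      qed
    next
      case False
      obtain k where k: "k \<in> {1..t}" and c: "(e = {0,k+1} \<and> f e = H3 (\<sigma> k)) \<or> (e = {1,k+1} \<and> f e = H2 (\<sigma> k))"
        using fe[OF e] False by blast
      obtain k' where k': "k' \<in> {1..t}" and c': "(e' = {0,k'+1} \<and> f e' = H3 (\<sigma> k')) \<or> (e' = {1,k'+1} \<and> f e' = H2 (\<sigma> k'))"
        using fe[OF e'] False by blast
      show ?thesis
      proof (cases "\<sigma> k = \<sigma> k'")
        case True
        then have "k = k'" using \<sigma>inj k k' by auto
        then have kk: "k' = k" by simp
        have h6: "H2 (\<sigma> k) \<noteq> H3 (\<sigma> k)" using Hs(6)[OF \<sigma>N(1)[OF k]] .
        from c show ?thesis
        proof (elim disjE conjE)
          assume e1: "e = {0,k+1}" and f1: "f e = H3 (\<sigma> k)"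
          from c' show ?thesis
          proof (elim disjE conjE)
            assume "e' = {0,k'+1}" then show ?thesis using e1 kk by simp
          next
            assume "e' = {1,k'+1}" and f2: "f e' = H2 (\<sigma> k')"
            have "H3 (\<sigma> k) = H2 (\<sigma> k)" using f1 f2 eq kk by simp
            then show ?thesis using h6 by simp
          qed
        next
          assume e1: "e = {1,k+1}" and f1: "f e = H2 (\<sigma> k)"
          from c' show ?thesis
          proof (elim disjE conjE)
            assume "e' = {1,k'+1}" then show ?thesis using e1 kk by simp
          next
            assume "e' = {0,k'+1}" and f2: "f e' = H3 (\<sigma> k')"
            have "H2 (\<sigma> k) = H3 (\<sigma> k)" using f1 f2 eq kk by simp
            then show ?thesis using h6 by simp
          qed
        qed
      next
        case False
        have U1: "f e \<in> {H2 (\<sigma> k), H3 (\<sigma> k)}" using c by auto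
        have U2: "f e' \<in> {H2 (\<sigma> k'), H3 (\<sigma> k')}" using c' by auto
        have "\<phi> (\<sigma> k + 1) \<in> f e" using U1 Hs[OF \<sigma>N(1)[OF k]] by auto
        then have A: "\<sigma> k \<in> K (\<sigma> k')" using \<sigma>N(1)[OF k] eq U2 unfolding K_def by auto
        have "\<phi> (\<sigma> k' + 1) \<in> f e'" using U2 Hs[OF \<sigma>N(1)[OF k']] by auto
        then have B: "\<sigma> k' \<in> K (\<sigma> k)" using \<sigma>N(1)[OF k'] eq U1 unfolding K_def by auto
        show ?thesis using S(3) \<sigma>S[OF k] \<sigma>S[OF k'] False A B by blast
      qed
    qed
  qed
  have \<psi>inj: "inj_on \<psi> (book_V t)"
    unfolding \<psi>_def using comp_inj_on[OF \<tau>inj inj_on_subset[OF inj]] \<tau>V by (auto simp: comp_def)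
  have \<psi>img: "\<psi> ` book_V t \<subseteq> \<Union>H" using img \<tau>V unfolding \<psi>_def by auto
  have fimg: "f ` book_E t \<subseteq> H" using fH by blast
  have cov: "\<forall>e\<in>book_E t. \<psi> ` e \<subseteq> f e" using covers by blast
  show ?thesis unfolding has_berge_def
    by (rule exI[of _ \<psi>], rule exI[of _ f]) (intro conjI \<psi>inj \<psi>img finj fimg cov)
qed

theorem proposition4:
  fixes H :: "'a set set" and t r :: nat
  assumes "t \<ge> 1" and "r \<ge> 2" and "finite H" and "uniform r H"
  shows "(\<not> has_berge H (book_V t) (book_E t) \<longrightarrow>
            \<not> shadow_copy_with_cores H (book_V (3*r*t)) (book_E (3*r*t)) (book_triangles (3*r*t)))
       \<and> (\<not> has_berge H (fan_V t) (fan_E t) \<longrightarrow>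
            \<not> shadow_copy_with_cores H (fan_V (3*r*t)) (fan_E (3*r*t)) (fan_triangles (3*r*t)))"
  using book_part[OF assms(1,2,4) refl] fan_part[OF assms(1,2,4) refl] by blast

end
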